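(* Let $p$ be a prime and $N\geq p$ an integer, and let $\mathcal E_{N,p}$ be the $\mathbb{R}_{\max}$-module of continuous convex piecewise affine functions $f$ on $[1,p]$ with integral slopes such that $f(1)=f(p)$ and $-f'_+(1)+pf'_-(p)\leq N$ (operations: pointwise max, and addition of real constants). Let $\phi_0=0$ and, for $a\in\{1,\dots,N-p\}$, $\phi_a(x)=\max\{-a(x-1),b(x-p)\}$ with $b=\lfloor(N-a)/p\rfloor$. Then each $\phi_a$, $0\leq a\leq N-p$, is an extremal element of $\mathcal E_{N,p}$; the sets $\{\phi_a+x\mid x\in\mathbb{R}_{\max}\}$ are exactly the extremal rays of $\mathcal E_{N,p}$; and these elements generate $\mathcal E_{N,p}$, i.e. the map $\sigma:\mathbb{R}_{\max}^{N-p+1}\to\mathcal E_{N,p}$, $\sigma((x_a))=\max_a(\phi_a+x_a)$, is surjective.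
   Context: $\mathbb{R}_{\max}=\mathbb{R}\cup\{-\infty\}$ with addition $\max$ and multiplication $+$ (so $\phi+(-\infty)$ is the zero element $-\infty$). An element $f$ of an $\mathbb{R}_{\max}$-module is extremal if $f_1\vee f_2=f$ implies $f_1=f$ or $f_2=f$; the set $\{f+x\mid x\in\mathbb{R}_{\max}\}$ for extremal $f$ is called an extremal ray. *)

theory Defs
  imports "HOL-Analysis.Analysis" "HOL-Computational_Algebra.Primes"
begin

text \<open>Elements of the R_max-module are represented as functions real => ereal;
  R_max = ereal without +infinity.\<close>

definition pw_affine_int :: "real \<Rightarrow> real \<Rightarrow> (real \<Rightarrow> real) \<Rightarrow> bool" where
  "pw_affine_int l r g \<longleftrightarrow>
     (\<exists>ts::real list. length ts \<ge> 2 \<and> sorted_wrt (<) ts \<and> hd ts = l \<and> last ts = r \<and>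
        (\<forall>i < length ts - 1. \<exists>s::int. \<exists>c::real.
           \<forall>x\<in>{ts!i .. ts!(i+1)}. g x = real_of_int s * x + c))"

definition E_Np :: "int \<Rightarrow> nat \<Rightarrow> (real \<Rightarrow> ereal) set" where
  "E_Np N p = {\<lambda>x. -\<infinity>} \<union>
     {f. \<exists>g::real \<Rightarrow> real.
          (\<forall>x. f x = (if x \<in> {1..real p} then ereal (g x) else -\<infinity>)) \<and>
          continuous_on {1..real p} g \<and> convex_on {1..real p} g \<and>
          pw_affine_int 1 (real p) g \<and> g 1 = g (real p) \<and>
          (\<exists>d1 dp. (g has_real_derivative d1) (at 1 within {1..real p}) \<and>
                   (g has_real_derivative dp) (at (real p) within {1..real p}) \<and>
                   - d1 + real p * dp \<le> real_of_int N)}"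

definition rmax_extremal :: "(real \<Rightarrow> ereal) set \<Rightarrow> (real \<Rightarrow> ereal) \<Rightarrow> bool" where
  "rmax_extremal E f \<longleftrightarrow> f \<in> E \<and> f \<noteq> (\<lambda>x. -\<infinity>) \<and>
     (\<forall>f1\<in>E. \<forall>f2\<in>E. sup f1 f2 = f \<longrightarrow> f1 = f \<or> f2 = f)"

definition rmax_ray :: "(real \<Rightarrow> ereal) \<Rightarrow> (real \<Rightarrow> ereal) set" where
  "rmax_ray f = {(\<lambda>y. f y + x) | x. x \<noteq> \<infinity>}"

definition phi :: "int \<Rightarrow> nat \<Rightarrow> int \<Rightarrow> real \<Rightarrow> ereal" where
  "phi N p a = (\<lambda>x. if x \<in> {1..real p} then
       ereal (if a = 0 then 0
              else max (- real_of_int a * (x - 1))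
                       (real_of_int \<lfloor>real_of_int (N - a) / real p\<rfloor> * (x - real p)))
     else -\<infinity>)"

definition sigma :: "int \<Rightarrow> nat \<Rightarrow> (int \<Rightarrow> ereal) \<Rightarrow> real \<Rightarrow> ereal" where
  "sigma N p xs = (\<lambda>y. SUP a\<in>{0..N - int p}. phi N p a y + xs a)"

end

theory Submission
  imports Defs
begin

lemma conv_fwd:
  fixes g :: "real \<Rightarrow> real"
  assumes cv: "convex_on {lo..hi} g" and u: "lo \<le> u" and x: "x \<le> hi" and uv: "u < v" and vx: "v < x"
    and gu: "g u = s * u + c" and gv: "g v = s * v + c"
  shows "s * x + c \<le> g x"
proof -
  have "convex_on {u..x} g" using cv u x by (intro convex_on_subset[OF cv]) (use u x in auto)
  from convex_onD_Icc'[OF this, of v] uv vx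
  have "g v \<le> (g x - g u) / (x - u) * (v - u) + g u" by auto
  then have "s * (v-u) \<le> ((g x - g u) / (x - u)) * (v - u)" using gu gv by (simp add: algebra_simps)
  then have "s \<le> (g x - g u) / (x - u)" using uv by (meson diff_gt_0_iff_gt mult_right_le_imp_le)
  then have "s * (x-u) \<le> g x - g u" using uv vx by (simp add: pos_le_divide_eq)
  then show ?thesis using gu by (simp add: algebra_simps)
qed

lemma conv_bwd:
  fixes g :: "real \<Rightarrow> real"
  assumes cv: "convex_on {lo..hi} g" and x: "lo \<le> x" and v: "v \<le> hi" and uv: "u < v" and xu: "x < u"
    and gu: "g u = s * u + c" and gv: "g v = s * v + c"
  shows "s * x + c \<le> g x"
proof -
  have "convex_on {x..v} g" by (intro convex_on_subset[OF cv]) (use x v in auto)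
  from convex_onD_Icc''[OF this, of u] uv xu
  have "g u \<le> (g x - g v) / (v - x) * (v - u) + g v" by auto
  then have "(-s) * (v-u) \<le> ((g x - g v) / (v - x)) * (v - u)" using gu gv by (simp add: algebra_simps)
  then have "-s \<le> (g x - g v) / (v - x)" using uv by (meson diff_gt_0_iff_gt mult_right_le_imp_le)
  then have "-s * (v-x) \<le> g x - g v" using uv xu by (simp add: pos_le_divide_eq)
  then show ?thesis using gv by (simp add: algebra_simps)
qed

lemma line_below:
  fixes g :: "real \<Rightarrow> real"
  assumes cv: "convex_on {lo..hi} g" and u: "lo \<le> u" and v: "v \<le> hi" and uv: "u < v"
    and eq: "\<forall>x\<in>{u..v}. g x = s * x + c" and x: "x \<in> {lo..hi}"
  shows "s * x + c \<le> g x"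
proof -
  have gu: "g u = s * u+c" and gv: "g v = s * v+c" using eq uv by auto
  consider "x < u" | "x \<in> {u..v}" | "v < x" by force
  then show ?thesis
  proof cases
    case 1 then show ?thesis using conv_bwd[OF cv _ v uv 1 gu gv] x by auto
  next
    case 2 then show ?thesis using eq by auto
  next
    case 3 then show ?thesis using conv_fwd[OF cv u _ uv 3 gu gv] x by auto
  qed
qed

lemma sorted_le:
  fixes ts :: "real list"
  assumes "sorted_wrt (<) ts" "i \<le> j" "j < length ts"
  shows "ts!i \<le> ts!j"
proof (cases "i = j")
  case False
  then show ?thesis using sorted_wrt_nth_less[OF assms(1), of i j] assms by simp
qed simp

lemma sorted_bounds:
  fixes ts :: "real list"
  assumes "sorted_wrt (<) ts" "k < length ts"
  shows "hd ts \<le> ts!k \<and> ts!k \<le> last ts"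
proof -
  have "hd ts = ts!0" using assms by (cases ts) auto
  moreover have "last ts = ts!(length ts - 1)" using assms by (intro last_conv_nth) auto
  moreover have "ts!0 \<le> ts!k"
    using assms by (intro sorted_le) auto
  moreover have "ts!k \<le> ts!(length ts - 1)"
    using assms by (intro sorted_le) auto
  ultimately show ?thesis by simp
qed

lemma no_between:
  fixes ts :: "real list"
  assumes "sorted_wrt (<) ts" "i+1 < length ts" "z \<in> set ts"
  shows "\<not> (ts!i < z \<and> z < ts!(i+1))"
proof
  assume h: "ts!i < z \<and> z < ts!(i+1)"
  obtain k where k: "k < length ts" "z = ts!k" using assms(3) by (metis in_set_conv_nth)
  show False
  proof (cases "k \<le> i")
    case True
    then have "ts!k \<le> ts!i" using assms k by (intro sorted_le) auto
    then show False using h k by simp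
  next
    case False
    then have "ts!(i+1) \<le> ts!k" using assms k by (intro sorted_le) auto
    then show False using h k by simp
  qed
qed

lemma piece_cover:
  fixes ts :: "real list"
  assumes "sorted_wrt (<) ts" "length ts \<ge> 2" "hd ts \<le> y" "y \<le> last ts"
  shows "\<exists>i. i+1 < length ts \<and> ts!i \<le> y \<and> y \<le> ts!(i+1)"
  using assms
proof (induction ts)
  case Nil then show ?case by simp
next
  case (Cons a rest)
  then obtain b rest' where r: "rest = b # rest'" by (cases rest) auto
  show ?case
  proof (cases "y \<le> b")
    case True
    then show ?thesis using Cons.prems r by (intro exI[of _ 0]) auto
  next
    case False
    show ?thesis
    proof (cases rest')
      case Nil
      then show ?thesis using Cons.prems r by (intro exI[of _ 0]) auto
    next
      case (Cons c rest'')
      have "\<exists>i. i+1 < length rest \<and> rest!i \<le> y \<and> y \<le> rest!(i+1)"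
        using Cons.IH Cons.prems False r Cons by auto
      then obtain i where "i+1 < length rest \<and> rest!i \<le> y \<and> y \<le> rest!(i+1)" by blast
      then show ?thesis by (intro exI[of _ "Suc i"]) auto
    qed
  qed
qed

lemma list_of_K:
  fixes K :: "real set"
  assumes "finite K" "l < r" "l \<in> K" "r \<in> K" "K \<subseteq> {l..r}"
  defines "ts \<equiv> sorted_list_of_set K"
  shows "length ts \<ge> 2 \<and> sorted_wrt (<) ts \<and> hd ts = l \<and> last ts = r \<and> set ts = K"
proof -
  have st: "sorted_wrt (<) ts" and se: "set ts = K" using assms by (auto simp: ts_def)
  have "card {l, r} \<le> card K" using assms by (intro card_mono) auto
  then have len: "length ts \<ge> 2" using assms by (simp add: ts_def)
  have h1: "hd ts \<in> K" "last ts \<in> K" using se len by (metis hd_in_set last_in_set list.size(3) not_numeral_le_zero)+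
  have "\<forall>k<length ts. hd ts \<le> ts!k \<and> ts!k \<le> last ts" using sorted_bounds[OF st] by blast
  then have "\<forall>z\<in>K. hd ts \<le> z \<and> z \<le> last ts" using se by (metis in_set_conv_nth)
  then have "hd ts = l" "last ts = r" using h1 assms by (meson antisym atLeastAtMost_iff subsetD)+
  then show ?thesis using st se len by simp
qed

lemma max_lines_pw:
  fixes s :: "'i \<Rightarrow> int" and c :: "'i \<Rightarrow> real"
  assumes fin: "finite I" and ne: "I \<noteq> {}" and lr: "l < r"
  shows "\<exists>ts. length ts \<ge> 2 \<and> sorted_wrt (<) ts \<and> hd ts = l \<and> last ts = r \<and>
     (\<forall>i < length ts - 1. \<exists>j\<in>I. \<forall>x\<in>{ts!i..ts!(i+1)}.
        Max ((\<lambda>k. real_of_int (s k) * x + c k) ` I) = real_of_int (s j) * x + c j)"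
proof -
  define G where "G x = Max ((\<lambda>k. real_of_int (s k) * x + c k) ` I)" for x
  define K where "K = {l, r} \<union> ({z. \<exists>j\<in>I. \<exists>k\<in>I. s j \<noteq> s k \<and> z = (c k - c j) / real_of_int (s j - s k)} \<inter> {l..r})"
  have "{z. \<exists>j\<in>I. \<exists>k\<in>I. s j \<noteq> s k \<and> z = (c k - c j) / real_of_int (s j - s k)}
      \<subseteq> (\<lambda>(j,k). (c k - c j) / real_of_int (s j - s k)) ` (I \<times> I)" by auto
  moreover have "finite ((\<lambda>(j,k). (c k - c j) / real_of_int (s j - s k)) ` (I \<times> I))" using fin by simp
  ultimately have "finite {z. \<exists>j\<in>I. \<exists>k\<in>I. s j \<noteq> s k \<and> z = (c k - c j) / real_of_int (s j - s k)}"
    by (rule finite_subset)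
  then have finK: "finite K" unfolding K_def by simp
  define ts where "ts = sorted_list_of_set K"
  have L: "length ts \<ge> 2 \<and> sorted_wrt (<) ts \<and> hd ts = l \<and> last ts = r \<and> set ts = K"
    unfolding ts_def using list_of_K[OF finK lr] unfolding K_def using lr by auto
  have pieces: "\<exists>j\<in>I. \<forall>x\<in>{ts!i..ts!(i+1)}. G x = real_of_int (s j) * x + c j" if i: "i < length ts - 1" for i
  proof -
    define u where "u = ts!i"
    define v where "v = ts!(i+1)"
    have st: "sorted_wrt (<) ts" using L by simp
    have uv: "u < v" unfolding u_def v_def using sorted_wrt_nth_less[OF st, of i "i+1"] i by simp
    have lu: "l \<le> u" using sorted_bounds[OF st, of i] i L unfolding u_def by auto
    have vr: "v \<le> r" using sorted_bounds[OF st, of "i+1"] i L unfolding v_def by auto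
    have nob: "\<And>z. z \<in> K \<Longrightarrow> \<not> (u < z \<and> z < v)"
      unfolding u_def v_def using no_between[OF st, of i] i L by auto
    define m where "m = (u+v)/2"
    have m: "u < m" "m < v" using uv unfolding m_def by auto
    have "G m \<in> (\<lambda>k. real_of_int (s k) * m + c k) ` I" unfolding G_def using fin ne by (intro Max_in) auto
    then obtain j where j: "j \<in> I" "G m = real_of_int (s j) * m + c j" by auto
    have "G x = real_of_int (s j) * x + c j" if x: "x \<in> {u..v}" for x
    proof -
      have le: "real_of_int (s k) * x + c k \<le> real_of_int (s j) * x + c j" if k: "k \<in> I" for k
      proof (rule ccontr)
        assume lt: "\<not> ?thesis"
        have km: "real_of_int (s k) * m + c k \<le> G m" unfolding G_def using fin k by (intro Max_ge) auto
        define \<alpha> where "\<alpha> = real_of_int (s j - s k)"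
        define \<beta> where "\<beta> = c j - c k"
        have dm: "\<alpha> * m + \<beta> \<ge> 0" using km j unfolding \<alpha>_def \<beta>_def by (simp add: algebra_simps)
        have dx: "\<alpha> * x + \<beta> < 0" using lt unfolding \<alpha>_def \<beta>_def by (simp add: algebra_simps)
        have sjk: "s j \<noteq> s k"
        proof
          assume "s j = s k" then show False using dm dx unfolding \<alpha>_def by simp
        qed
        then have a0: "\<alpha> \<noteq> 0" unfolding \<alpha>_def by simp
        define z where "z = (c k - c j) / real_of_int (s j - s k)"
        have az: "\<alpha> * z = - \<beta>" unfolding z_def \<alpha>_def \<beta>_def using a0 \<alpha>_def by (simp add: field_simps)
        have p1: "\<alpha> * (z - x) > 0" using az dx by (simp add: algebra_simps)
        have p2: "\<alpha> * (m - z) \<ge> 0" using az dm by (simp add: algebra_simps)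
        have zb: "u < z \<and> z < v"
        proof (cases "\<alpha> > 0")
          case True
          then have "z > x" "m \<ge> z" using p1 p2 by (simp_all add: zero_less_mult_iff zero_le_mult_iff)
          then show ?thesis using x m by auto
        next
          case False
          then have "\<alpha> < 0" using a0 by simp
          then have "z < x" "m \<le> z" using p1 p2 by (simp_all add: zero_less_mult_iff zero_le_mult_iff)
          then show ?thesis using x m by auto
        qed
        have "z \<in> K" unfolding K_def using j k sjk zb lu vr unfolding z_def by auto
        then show False using nob zb by blast
      qed
      have "G x \<le> real_of_int (s j) * x + c j" unfolding G_def using fin ne le by (subst Max_le_iff) auto
      moreover have "G x \<ge> real_of_int (s j) * x + c j" unfolding G_def using fin j by (intro Max_ge) auto
      ultimately show ?thesis by simp
    qed
    then show ?thesis using j unfolding u_def v_def by blast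
  qed
  show ?thesis using L pieces unfolding G_def by (intro exI[of _ ts]) auto
qed

lemma max_cont:
  fixes h :: "'i \<Rightarrow> real \<Rightarrow> real"
  assumes "finite I" "I \<noteq> {}" "\<forall>k\<in>I. continuous_on S (h k)"
  shows "continuous_on S (\<lambda>x. Max ((\<lambda>k. h k x) ` I))"
  using assms
proof (induction I rule: finite_ne_induct)
  case (singleton k) then show ?case by simp
next
  case (insert k I)
  have "continuous_on S (\<lambda>x. max (h k x) (Max ((\<lambda>k. h k x) ` I)))"
    using insert by (intro continuous_on_max) auto
  moreover have "(\<lambda>x. Max ((\<lambda>k. h k x) ` insert k I)) = (\<lambda>x. max (h k x) (Max ((\<lambda>k. h k x) ` I)))"
    using insert by (auto simp: Max_insert)
  ultimately show ?case by metis
qed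

lemma max_lines_convex:
  fixes s :: "'i \<Rightarrow> real" and c :: "'i \<Rightarrow> real"
  assumes fin: "finite I" and ne: "I \<noteq> {}" and S: "convex S"
  shows "convex_on S (\<lambda>x. Max ((\<lambda>k. s k * x + c k) ` I))"
proof (rule convex_onI[OF _ S])
  fix t x y :: real assume t: "0 < t" "t < 1"
  define z where "z = (1 - t) *\<^sub>R x + t *\<^sub>R y"
  have "Max ((\<lambda>k. s k * z + c k) ` I) \<in> (\<lambda>k. s k * z + c k) ` I" using fin ne by (intro Max_in) auto
  then obtain j where j: "j \<in> I" "Max ((\<lambda>k. s k * z + c k) ` I) = s j * z + c j" by auto
  have "s j * z + c j = (1 - t) * (s j * x + c j) + t * (s j * y + c j)"
    unfolding z_def by (simp add: algebra_simps)
  also have "\<dots> \<le> (1 - t) * Max ((\<lambda>k. s k * x + c k) ` I) + t * Max ((\<lambda>k. s k * y + c k) ` I)"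
    using t fin j by (intro add_mono mult_left_mono Max_ge) auto
  finally show "Max ((\<lambda>k. s k * ((1 - t) *\<^sub>R x + t *\<^sub>R y) + c k) ` I)
    \<le> (1 - t) * Max ((\<lambda>k. s k * x + c k) ` I) + t * Max ((\<lambda>k. s k * y + c k) ` I)"
    using j unfolding z_def by simp
qed

lemma deriv_left:
  fixes g :: "real \<Rightarrow> real"
  assumes "l < t" "t \<le> r" "\<forall>x\<in>{l..t}. g x = s * x + c"
  shows "(g has_real_derivative s) (at l within {l..r})"
proof -
  have "((\<lambda>x. s * x + c) has_real_derivative s) (at l within {l..r})"
    by (auto intro!: derivative_eq_intros)
  then show ?thesis
    by (rule has_field_derivative_transform_within[where d="t - l"]) (use assms in \<open>auto simp: dist_real_def\<close>)
qed

lemma deriv_right: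
  fixes g :: "real \<Rightarrow> real"
  assumes "t < r" "l \<le> t" "\<forall>x\<in>{t..r}. g x = s * x + c"
  shows "(g has_real_derivative s) (at r within {l..r})"
proof -
  have "((\<lambda>x. s * x + c) has_real_derivative s) (at r within {l..r})"
    by (auto intro!: derivative_eq_intros)
  then show ?thesis
    by (rule has_field_derivative_transform_within[where d="r - t"]) (use assms in \<open>auto simp: dist_real_def\<close>)
qed

lemma deriv_unique_left:
  fixes g :: "real \<Rightarrow> real"
  assumes "l < r" "(g has_real_derivative d) (at l within {l..r})" "(g has_real_derivative d') (at l within {l..r})"
  shows "d = d'"
  using assms by (intro has_field_derivative_unique[OF assms(2,3)]) (simp add: at_within_Icc_at_right)

lemma deriv_unique_right:
  fixes g :: "real \<Rightarrow> real"
  assumes "l < r" "(g has_real_derivative d) (at r within {l..r})" "(g has_real_derivative d') (at r within {l..r})"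
  shows "d = d'"
  using assms by (intro has_field_derivative_unique[OF assms(2,3)]) (simp add: at_within_Icc_at_left)

definition Eg :: "int \<Rightarrow> nat \<Rightarrow> (real \<Rightarrow> real) \<Rightarrow> bool" where
  "Eg N p g \<longleftrightarrow> continuous_on {1..real p} g \<and> convex_on {1..real p} g \<and>
          pw_affine_int 1 (real p) g \<and> g 1 = g (real p) \<and>
          (\<exists>d1 dp. (g has_real_derivative d1) (at 1 within {1..real p}) \<and>
                   (g has_real_derivative dp) (at (real p) within {1..real p}) \<and>
                   - d1 + real p * dp \<le> real_of_int N)"

lemma E_Np_alt: "E_Np N p = {\<lambda>x. -\<infinity>} \<union>
     {f. \<exists>g. (\<forall>x. f x = (if x \<in> {1..real p} then ereal (g x) else -\<infinity>)) \<and> Eg N p g}"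
  unfolding E_Np_def Eg_def by simp

lemma EF:
  assumes E: "Eg N p g" and p1: "1 < real p"
  shows "\<exists>sF sL::int. (\<forall>x\<in>{1..real p}. g 1 + sF * (x-1) \<le> g x) \<and>
     (\<forall>x\<in>{1..real p}. g (real p) + sL * (x - real p) \<le> g x) \<and> - sF + int p * sL \<le> N"
proof -
  from E obtain d1 dp where cv: "convex_on {1..real p} g"
    and d1: "(g has_real_derivative d1) (at 1 within {1..real p})"
    and dp: "(g has_real_derivative dp) (at (real p) within {1..real p})"
    and dd: "- d1 + real p * dp \<le> real_of_int N"
    and pw: "pw_affine_int 1 (real p) g" unfolding Eg_def by blast
  from pw obtain ts :: "real list" where len: "length ts \<ge> 2" and st: "sorted_wrt (<) ts"
    and hd: "hd ts = 1" and la: "last ts = real p"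
    and pc: "\<forall>i < length ts - 1. \<exists>s::int. \<exists>c::real. \<forall>x\<in>{ts!i .. ts!(i+1)}. g x = real_of_int s * x + c"
    unfolding pw_affine_int_def by blast
  define n where "n = length ts"
  obtain s0 c0 where s0: "\<forall>x\<in>{ts!0 .. ts!1}. g x = real_of_int s0 * x + c0" using pc len by fastforce
  have nn: "n - 2 + 1 = n - 1" "n - 2 < length ts - 1" using len unfolding n_def by auto
  obtain s1 c1 where s1: "\<forall>x\<in>{ts!(n-2) .. ts!(n-1)}. g x = real_of_int s1 * x + c1"
    using pc[rule_format, OF nn(2)] unfolding nn(1) by blast
  have t0: "ts!0 = 1" using hd len by (cases ts) auto
  have tn: "ts!(n-1) = real p" using la len unfolding n_def by (subst last_conv_nth[symmetric]) auto
  have t01: "ts!0 < ts!1" using sorted_wrt_nth_less[OF st, of 0 1] len by auto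
  have t1p: "ts!1 \<le> real p" using sorted_bounds[OF st, of 1] len la by auto
  have tn2: "ts!(n-2) < ts!(n-1)" using sorted_wrt_nth_less[OF st, of "n-2" "n-1"] len unfolding n_def by auto
  have tn1: "1 \<le> ts!(n-2)" using sorted_bounds[OF st, of "n-2"] len hd unfolding n_def by auto
  have b0: "\<forall>x\<in>{1..real p}. real_of_int s0 * x + c0 \<le> g x"
    using line_below[OF cv _ t1p t01 s0] t0 by auto
  have b1: "\<forall>x\<in>{1..real p}. real_of_int s1 * x + c1 \<le> g x"
    using line_below[OF cv tn1 _ tn2 s1] tn by auto
  have g1: "g 1 = real_of_int s0 + c0" using s0 t0 t01 by auto
  have gp: "g (real p) = real_of_int s1 * real p + c1" using s1 tn tn2 by auto
  have "(g has_real_derivative real_of_int s0) (at 1 within {1..real p})"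
    using deriv_left[of 1 "ts!1" "real p" g] s0 t0 t01 t1p by auto
  then have e0: "d1 = real_of_int s0" using deriv_unique_left[OF p1 d1] by simp
  have "(g has_real_derivative real_of_int s1) (at (real p) within {1..real p})"
    using deriv_right[of "ts!(n-2)" "real p" 1 g] s1 tn tn1 tn2 by auto
  then have e1: "dp = real_of_int s1" using deriv_unique_right[OF p1 dp] by simp
  have "real_of_int (- s0 + int p * s1) \<le> real_of_int N" using dd e0 e1 by simp
  then have "- s0 + int p * s1 \<le> N" by linarith
  moreover have "\<forall>x\<in>{1..real p}. g 1 + s0 * (x-1) \<le> g x" using b0 g1 by (auto simp: algebra_simps)
  moreover have "\<forall>x\<in>{1..real p}. g (real p) + s1 * (x - real p) \<le> g x" using b1 gp by (auto simp: algebra_simps)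
  ultimately show ?thesis by blast
qed


definition bb :: "int \<Rightarrow> nat \<Rightarrow> int \<Rightarrow> int" where
  "bb N p a = \<lfloor>real_of_int (N - a) / real p\<rfloor>"

definition phr :: "int \<Rightarrow> nat \<Rightarrow> int \<Rightarrow> real \<Rightarrow> real" where
  "phr N p a y = (if a = 0 then 0 else max (- real_of_int a * (y - 1)) (real_of_int (bb N p a) * (y - real p)))"

lemma phi_alt: "phi N p a y = (if y \<in> {1..real p} then ereal (phr N p a y) else -\<infinity>)"
  unfolding phi_def phr_def bb_def by simp

definition asg :: "int \<Rightarrow> nat \<Rightarrow> int \<Rightarrow> int" where
  "asg N p s = (if s \<le> 0 then - s else N - int p * s)"

definition cand :: "nat \<Rightarrow> int \<Rightarrow> real \<Rightarrow> real" where
  "cand p s c = (if s \<le> 0 then real_of_int s + c else real_of_int s * real p + c)"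

lemma bb_ge:
  assumes "int p * sL \<le> N - a" "p > 0"
  shows "sL \<le> bb N p a"
proof -
  have "real_of_int sL * real p \<le> real_of_int (N - a)" using assms(1)
    by (metis mult.commute of_int_le_iff of_int_mult of_int_of_nat_eq)
  then have "real_of_int sL \<le> real_of_int (N - a) / real p" using assms(2) by (simp add: pos_le_divide_eq)
  then show ?thesis unfolding bb_def by (simp add: le_floor_iff)
qed

lemma piece_phi:
  fixes g :: "real \<Rightarrow> real" and s sF sL :: int and m c :: real
  assumes p1: "1 < real p" and Np: "int p \<le> N"
    and hF: "\<forall>x\<in>{1..real p}. g 1 + sF * (x-1) \<le> g x"
    and hL: "\<forall>x\<in>{1..real p}. g (real p) + sL * (x - real p) \<le> g x"
    and con: "- sF + int p * sL \<le> N" and g1p: "g 1 = g (real p)"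
    and lb: "\<forall>x\<in>{1..real p}. s * x + c \<le> g x" and m: "1 < m" "m < real p" and gm: "g m = s * m + c"
  shows "asg N p s \<in> {0..N - int p} \<and> (\<forall>y\<in>{1..real p}. phr N p (asg N p s) y + cand p s c \<le> g y)
     \<and> (\<forall>y. real_of_int s * y + c \<le> phr N p (asg N p s) y + cand p s c)"
proof -
  have p0: "p > 0" using p1 by simp
  have m1: "m \<in> {1..real p}" using m by auto
  have l1: "s + c \<le> g 1" using lb[rule_format, of 1] p1 by auto
  have lp: "s * real p + c \<le> g (real p)" using lb[rule_format, of "real p"] p1 by auto
  consider "s = 0" | "s < 0" | "s > 0" by linarith
  then show ?thesis
  proof cases
    case 1
    then show ?thesis using lb Np unfolding asg_def cand_def phr_def by auto
  next
    case 2
    define a where "a = - s"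
    have a: "asg N p s = a" "cand p s c = s + c" "a \<ge> 1" using 2 unfolding asg_def cand_def a_def by auto
    have "real_of_int s * (m - 1) \<ge> real_of_int sF * (m - 1)"
      using hF[rule_format, OF m1] gm l1 by (simp add: algebra_simps)
    then have "real_of_int sF \<le> real_of_int s" using m by (meson diff_gt_0_iff_gt mult_right_le_imp_le)
    then have sFs: "sF \<le> s" by simp
    have sL1: "sL \<ge> 1"
    proof (rule ccontr)
      assume "\<not> sL \<ge> 1"
      then have "real_of_int sL * (m - real p) \<ge> 0" using m by (intro mult_nonpos_nonpos) auto
      then have "g m \<ge> g (real p)" using hL[rule_format, OF m1] by simp
      then have "real_of_int s * (1 - m) \<le> 0" using gm l1 g1p by (simp add: algebra_simps)
      moreover have "real_of_int s * (1 - m) > 0" using 2 m by (intro mult_neg_neg) auto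
      ultimately show False by simp
    qed
    have "int p \<le> int p * sL" using sL1 p0 by simp
    then have aR: "a \<le> N - int p" using con sFs unfolding a_def by linarith
    have bL: "sL \<le> bb N p a" using con sFs p0 unfolding a_def by (intro bb_ge) auto
    have A: "a \<in> {0..N - int p}" using aR a by auto
    have B: "phr N p a y + (s + c) \<le> g y" if y: "y \<in> {1..real p}" for y
    proof -
      have "- real_of_int a * (y - 1) + (s + c) = s * y + c" unfolding a_def by (simp add: algebra_simps)
      also have "\<dots> \<le> g y" using lb y by auto
      finally have X1: "- real_of_int a * (y - 1) + (s + c) \<le> g y" .
      have "(real_of_int (bb N p a) - real_of_int sL) * (y - real p) \<le> 0"
        using bL y by (intro mult_nonneg_nonpos) auto
      then have "real_of_int (bb N p a) * (y - real p) + (s + c) \<le> g (real p) + sL * (y - real p)"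
        using l1 g1p by (simp add: algebra_simps)
      also have "\<dots> \<le> g y" using hL y by auto
      finally have X2: "real_of_int (bb N p a) * (y - real p) + (s + c) \<le> g y" .
      show ?thesis using X1 X2 a unfolding phr_def by auto
    qed
    have C: "real_of_int s * y + c \<le> phr N p a y + (s + c)" for y
      using a unfolding phr_def a_def by (auto simp: algebra_simps)
    show ?thesis using A B C a by simp
  next
    case 3
    define a where "a = N - int p * s"
    have a: "asg N p s = a" "cand p s c = s * real p + c" using 3 unfolding asg_def cand_def a_def by auto
    have "real_of_int s * (m - real p) \<ge> real_of_int sL * (m - real p)"
      using hL[rule_format, OF m1] gm lp by (simp add: algebra_simps)
    then have "real_of_int s * (real p - m) \<le> real_of_int sL * (real p - m)" by (simp add: algebra_simps)
    then have "real_of_int s \<le> real_of_int sL" using m by (meson diff_gt_0_iff_gt mult_right_le_imp_le)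
    then have ssL: "s \<le> sL" by simp
    have sF1: "sF \<le> -1"
    proof (rule ccontr)
      assume "\<not> sF \<le> -1"
      then have "real_of_int sF * (m - 1) \<ge> 0" using m by (intro mult_nonneg_nonneg) auto
      then have "g m \<ge> g 1" using hF[rule_format, OF m1] by simp
      then have "real_of_int s * (m - real p) \<ge> 0" using gm lp g1p by (simp add: algebra_simps)
      moreover have "real_of_int s * (m - real p) < 0" using 3 m by (intro mult_pos_neg) auto
      ultimately show False by simp
    qed
    have "int p * s \<le> int p * sL" using ssL by (simp add: mult_left_mono)
    then have a1: "a \<ge> 1" using con sF1 unfolding a_def by linarith
    have "int p \<le> int p * s" using 3 p0 by simp
    then have aR: "a \<le> N - int p" unfolding a_def by linarith
    have A: "a \<in> {0..N - int p}" using aR a1 by auto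
    have bs: "bb N p a = s" unfolding bb_def a_def using p0 by simp
    have B: "phr N p a y + (s * real p + c) \<le> g y" if y: "y \<in> {1..real p}" for y
    proof -
      have "sF + a \<ge> 0" using con \<open>int p * s \<le> int p * sL\<close> unfolding a_def by linarith
      then have "real_of_int sF + real_of_int a \<ge> 0" by (metis of_int_0_le_iff of_int_add)
      then have "(real_of_int sF + real_of_int a) * (y - 1) \<ge> 0"
        using y by (intro mult_nonneg_nonneg) auto
      then have "- real_of_int a * (y - 1) + (s * real p + c) \<le> g 1 + sF * (y - 1)"
        using lp g1p by (simp add: algebra_simps)
      also have "\<dots> \<le> g y" using hF y by auto
      finally have X1: "- real_of_int a * (y - 1) + (s * real p + c) \<le> g y" .
      have X2: "real_of_int (bb N p a) * (y - real p) + (s * real p + c) \<le> g y"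
        using bs lb y by (simp add: algebra_simps)
      show ?thesis using X1 X2 a1 unfolding phr_def by auto
    qed
    have C: "real_of_int s * y + c \<le> phr N p a y + (s * real p + c)" for y
      using a1 bs unfolding phr_def by (auto simp: algebra_simps)
    show ?thesis using A B C a by simp
  qed
qed


lemma decomp:
  assumes E: "Eg N p g" and p1: "1 < real p" and Np: "int p \<le> N"
  shows "\<exists>xs. (\<forall>a\<in>{0..N - int p}. xs a \<noteq> \<infinity>) \<and>
     sigma N p xs = (\<lambda>x. if x \<in> {1..real p} then ereal (g x) else -\<infinity>)"
proof -
  obtain sF sL :: int where hF: "\<forall>x\<in>{1..real p}. g 1 + sF * (x-1) \<le> g x"
    and hL: "\<forall>x\<in>{1..real p}. g (real p) + sL * (x - real p) \<le> g x" and con: "- sF + int p * sL \<le> N"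
    using EF[OF E p1] by blast
  from E have cv: "convex_on {1..real p} g" and g1p: "g 1 = g (real p)"
    and pw: "pw_affine_int 1 (real p) g" unfolding Eg_def by blast+
  from pw obtain ts :: "real list" where len: "length ts \<ge> 2" and st: "sorted_wrt (<) ts"
    and hd: "hd ts = 1" and la: "last ts = real p"
    and pc: "\<forall>i < length ts - 1. \<exists>s::int. \<exists>c::real. \<forall>x\<in>{ts!i .. ts!(i+1)}. g x = real_of_int s * x + c"
    unfolding pw_affine_int_def by blast
  define n where "n = length ts - 1"
  obtain S :: "nat \<Rightarrow> int" and C :: "nat \<Rightarrow> real" where
    SC: "\<forall>i<n. \<forall>x\<in>{ts!i .. ts!(i+1)}. g x = real_of_int (S i) * x + C i"
    using pc unfolding n_def by metis
  define A where "A i = asg N p (S i)" for i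
  define Cd where "Cd i = cand p (S i) (C i)" for i
  have F: "A i \<in> {0..N - int p} \<and> (\<forall>y\<in>{1..real p}. phr N p (A i) y + Cd i \<le> g y)
     \<and> (\<forall>y. real_of_int (S i) * y + C i \<le> phr N p (A i) y + Cd i)" if i: "i < n" for i
  proof -
    have uv: "ts!i < ts!(i+1)" using sorted_wrt_nth_less[OF st, of i "i+1"] i unfolding n_def by simp
    have u1: "1 \<le> ts!i" using sorted_bounds[OF st, of i] i hd unfolding n_def by auto
    have vp: "ts!(i+1) \<le> real p" using sorted_bounds[OF st, of "i+1"] i la unfolding n_def by auto
    have lb: "\<forall>x\<in>{1..real p}. S i * x + C i \<le> g x"
      using line_below[OF cv u1 vp uv] SC i by auto
    define m where "m = (ts!i + ts!(i+1)) / 2"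
    have m: "1 < m" "m < real p" using uv u1 vp unfolding m_def by auto
    have gm: "g m = S i * m + C i" using SC i uv unfolding m_def by auto
    show ?thesis using piece_phi[OF p1 Np hF hL con g1p lb m gm] unfolding A_def Cd_def by blast
  qed
  define xs where "xs a = (if \<exists>i<n. A i = a then ereal (Max (Cd ` {i. i<n \<and> A i = a})) else -\<infinity>)" for a
  have xsinf: "xs a \<noteq> \<infinity>" for a unfolding xs_def by auto
  have "sigma N p xs y = (if y \<in> {1..real p} then ereal (g y) else -\<infinity>)" for y
  proof (cases "y \<in> {1..real p}")
    case False
    have "phi N p a y + xs a = -\<infinity>" for a using False xsinf[of a] by (cases "xs a") (auto simp: phi_alt)
    then have eq: "(\<lambda>a. phi N p a y + xs a) = (\<lambda>a. -\<infinity>)" by auto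
    have "{0..N - int p} \<noteq> {}" using Np by auto
    then have "sigma N p xs y = -\<infinity>" unfolding sigma_def by (subst eq) simp
    then show ?thesis using False by simp
  next
    case True
    have le: "phi N p a y + xs a \<le> ereal (g y)" if a: "a \<in> {0..N - int p}" for a
    proof (cases "\<exists>i<n. A i = a")
      case True
      have "Max (Cd ` {i. i<n \<and> A i = a}) \<in> Cd ` {i. i<n \<and> A i = a}" using True by (intro Max_in) auto
      then obtain j where j: "j < n" "A j = a" "Max (Cd ` {i. i<n \<and> A i = a}) = Cd j" by auto
      have "phr N p (A j) y + Cd j \<le> g y" using F[OF j(1)] \<open>y \<in> {1..real p}\<close> by blast
      then show ?thesis using True j \<open>y \<in> {1..real p}\<close> unfolding xs_def phi_alt by simp
    next
      case False
      then show ?thesis unfolding xs_def phi_alt by auto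
    qed
    obtain i where i: "i+1 < length ts" "ts!i \<le> y" "y \<le> ts!(i+1)"
      using piece_cover[OF st len] hd la True by auto
    have i': "i < n" using i unfolding n_def by simp
    have ge: "ereal (g y) \<le> phi N p (A i) y + xs (A i)"
    proof -
      have "g y = S i * y + C i" using SC i' i by auto
      also have "\<dots> \<le> phr N p (A i) y + Cd i" using F[OF i'] by blast
      also have "\<dots> \<le> phr N p (A i) y + Max (Cd ` {k. k<n \<and> A k = A i})" using i' by (intro add_left_mono Max_ge) auto
      finally show ?thesis using i' True unfolding xs_def phi_alt by auto
    qed
    have "sigma N p xs y \<le> ereal (g y)" unfolding sigma_def using le by (intro SUP_least) auto
    moreover have "ereal (g y) \<le> sigma N p xs y" unfolding sigma_def using ge F[OF i'] by (intro SUP_upper2[of "A i"]) auto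
    ultimately show ?thesis using True by simp
  qed
  then show ?thesis using xsinf by (intro exI[of _ xs]) auto
qed

lemma bb_le:
  assumes "p > 0"
  shows "real p * real_of_int (bb N p a) \<le> real_of_int (N - a)"
proof -
  have "real_of_int (bb N p a) \<le> real_of_int (N - a) / real p" unfolding bb_def by (rule of_int_floor_le)
  then show ?thesis using assms by (simp add: pos_le_divide_eq mult.commute)
qed

lemma SUP_minf: "(\<And>a. a \<in> A \<Longrightarrow> f a = (-\<infinity>::ereal)) \<Longrightarrow> (SUP a\<in>A. f a) = -\<infinity>"
  by (rule antisym, rule SUP_least) simp_all

lemma sigma_in_E:
  assumes p1: "1 < real p" and Np: "int p \<le> N" and xs: "\<forall>a\<in>{0..N - int p}. xs a \<noteq> \<infinity>"
  shows "sigma N p xs \<in> E_Np N p"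
proof -
  define R where "R = {0..N - int p}"
  have Rne: "R \<noteq> {}" using Np unfolding R_def by auto
  define S where "S = {a\<in>R. xs a \<noteq> -\<infinity>}"
  have finS: "finite S" unfolding S_def by (rule finite_subset[of _ R]) (auto simp: R_def)
  show ?thesis
  proof (cases "S = {}")
    case True
    have "phi N p a y + xs a = -\<infinity>" if "a \<in> R" for a y
      using True that xs unfolding S_def R_def by (cases "xs a") (auto simp: phi_alt)
    then have "sigma N p xs y = -\<infinity>" for y
      unfolding sigma_def R_def[symmetric] by (intro SUP_minf) auto
    then have "sigma N p xs = (\<lambda>x. -\<infinity>)" by auto
    then show ?thesis unfolding E_Np_def by simp
  next
    case False
    define r where "r a = real_of_ereal (xs a)" for a
    have xr: "xs a = ereal (r a)" if "a \<in> S" for a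
      using that xs unfolding S_def R_def r_def by (cases "xs a") auto
    define bb' where "bb' a = (if a = 0 then 0 else bb N p a)" for a
    define sl where "sl j = (if snd j then - fst j else bb' (fst j))" for j :: "int \<times> bool"
    define cc where "cc j = (if snd j then real_of_int (fst j) + r (fst j) else r (fst j) - real_of_int (bb' (fst j)) * real p)" for j :: "int \<times> bool"
    define I where "I = S \<times> (UNIV :: bool set)"
    define G where "G y = Max ((\<lambda>j. real_of_int (sl j) * y + cc j) ` I)" for y
    have finI: "finite I" and neI: "I \<noteq> {}" unfolding I_def using finS False by auto
    have lT: "real_of_int (sl (a,True)) * y + cc (a,True) = - real_of_int a * (y - 1) + r a" for a y
      unfolding sl_def cc_def by (simp add: algebra_simps)
    have lF: "real_of_int (sl (a,False)) * y + cc (a,False) = real_of_int (bb' a) * (y - real p) + r a" for a y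
      unfolding sl_def cc_def by (simp add: algebra_simps)
    have phrb: "phr N p a y = max (- real_of_int a * (y - 1)) (real_of_int (bb' a) * (y - real p))" for a y
      unfolding phr_def bb'_def by simp
    have Gge: "real_of_int (sl j) * y + cc j \<le> G y" if "j \<in> I" for j y
      unfolding G_def using finI that by (intro Max_ge) auto
    have Gin: "\<exists>j\<in>I. G y = real_of_int (sl j) * y + cc j" for y
    proof -
      have "G y \<in> (\<lambda>j. real_of_int (sl j) * y + cc j) ` I" unfolding G_def using finI neI by (intro Max_in) auto
      then show ?thesis by auto
    qed
    have phrG: "phr N p a y + r a \<le> G y" if "a \<in> S" for a y
      using Gge[of "(a,True)" y] Gge[of "(a,False)" y] that lT lF unfolding phrb I_def by auto
    have Gphr: "\<exists>a\<in>S. G y \<le> phr N p a y + r a" for y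
    proof -
      obtain j where j: "j \<in> I" "G y = real_of_int (sl j) * y + cc j" using Gin by blast
      obtain a k where ak: "j = (a,k)" by (cases j)
      have "G y \<le> phr N p a y + r a" using j lT lF unfolding ak phrb by (cases k) auto
      then show ?thesis using j unfolding ak I_def by auto
    qed
    have sig: "sigma N p xs = (\<lambda>y. if y \<in> {1..real p} then ereal (G y) else -\<infinity>)"
    proof
      fix y
      show "sigma N p xs y = (if y \<in> {1..real p} then ereal (G y) else -\<infinity>)"
      proof (cases "y \<in> {1..real p}")
        case False
        have "phi N p a y + xs a = -\<infinity>" if "a \<in> R" for a
          using False xs that unfolding R_def by (cases "xs a") (auto simp: phi_alt)
        then have "sigma N p xs y = -\<infinity>"
          unfolding sigma_def R_def[symmetric] by (intro SUP_minf) auto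
        then show ?thesis using False by simp
      next
        case True
        have "phi N p a y + xs a \<le> ereal (G y)" if "a \<in> R" for a
        proof (cases "a \<in> S")
          case True
          then show ?thesis using phrG[OF True, of y] xr[OF True] \<open>y \<in> {1..real p}\<close> by (simp add: phi_alt)
        next
          case False
          then have "xs a = -\<infinity>" using that unfolding S_def by auto
          then show ?thesis by (simp add: phi_alt)
        qed
        then have le: "sigma N p xs y \<le> ereal (G y)" unfolding sigma_def R_def[symmetric] by (intro SUP_least) auto
        obtain a where a: "a \<in> S" "G y \<le> phr N p a y + r a" using Gphr by blast
        have "ereal (G y) \<le> phi N p a y + xs a" using a xr[OF a(1)] True by (simp add: phi_alt)
        then have ge: "ereal (G y) \<le> sigma N p xs y"
          unfolding sigma_def R_def[symmetric] using a(1) unfolding S_def by (intro SUP_upper2[of a]) auto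
        show ?thesis using le ge True by simp
      qed
    qed
    have Gf: "G = (\<lambda>y. Max ((\<lambda>j. real_of_int (sl j) * y + cc j) ` I))" by (rule ext) (simp add: G_def)
    have cont: "continuous_on {1..real p} G" unfolding Gf using finI neI
      by (intro max_cont) (auto intro!: continuous_intros)
    have conv: "convex_on {1..real p} G" unfolding Gf using finI neI
      by (intro max_lines_convex[where s="\<lambda>j. real_of_int (sl j)" and c=cc]) auto
    obtain ts where len: "length ts \<ge> 2" and st: "sorted_wrt (<) ts" and hd: "hd ts = 1" and la: "last ts = real p"
      and pcs: "\<forall>i < length ts - 1. \<exists>j\<in>I. \<forall>x\<in>{ts!i..ts!(i+1)}. G x = real_of_int (sl j) * x + cc j"
      using max_lines_pw[OF finI neI p1, of sl cc] unfolding G_def by blast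
    have pw: "pw_affine_int 1 (real p) G" unfolding pw_affine_int_def
      using len st hd la pcs by (intro exI[of _ ts]) blast
    define n where "n = length ts"
    have nn: "n - 2 + 1 = n - 1" "n - 2 < length ts - 1" "(0::nat) < length ts - 1" using len unfolding n_def by auto
    obtain j0 where j0: "j0 \<in> I" "\<forall>x\<in>{ts!0..ts!1}. G x = real_of_int (sl j0) * x + cc j0"
      using pcs[rule_format, OF nn(3)] by auto
    obtain j1 where j1: "j1 \<in> I" "\<forall>x\<in>{ts!(n-2)..ts!(n-1)}. G x = real_of_int (sl j1) * x + cc j1"
      using pcs[rule_format, OF nn(2)] unfolding nn(1) by auto
    have t0: "ts!0 = 1" using hd len by (cases ts) auto
    have tn: "ts!(n-1) = real p" using la len unfolding n_def by (subst last_conv_nth[symmetric]) auto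
    have t01: "ts!0 < ts!1" using sorted_wrt_nth_less[OF st, of 0 1] len by auto
    have t1p: "ts!1 \<le> real p" using sorted_bounds[OF st, of 1] len la by auto
    have tn2: "ts!(n-2) < ts!(n-1)" using sorted_wrt_nth_less[OF st, of "n-2" "n-1"] len unfolding n_def by auto
    have tn1: "1 \<le> ts!(n-2)" using sorted_bounds[OF st, of "n-2"] len hd unfolding n_def by auto
    obtain a0 k0 where ak0: "j0 = (a0,k0)" by (cases j0)
    obtain a1 k1 where ak1: "j1 = (a1,k1)" by (cases j1)
    have a0S: "a0 \<in> S" and a1S: "a1 \<in> S" using j0 j1 ak0 ak1 unfolding I_def by auto
    have bb1: "bb N p a \<ge> 1" if "a \<in> S" for a
      using that unfolding S_def R_def by (intro bb_ge) (use p1 in auto)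
    have G1r: "r a \<le> G 1" if "a \<in> S" for a using Gge[of "(a,True)" 1] that lT[of a 1] unfolding I_def by simp
    have Gpr: "r a \<le> G (real p)" if "a \<in> S" for a using Gge[of "(a,False)" "real p"] that lF[of a "real p"] unfolding I_def by simp
    have G1: "G 1 = real_of_int (sl j0) * 1 + cc j0" using j0 t0 t01 by auto
    have Gp: "G (real p) = real_of_int (sl j1) * real p + cc j1" using j1 tn tn2 by auto
    have k0: "k0 \<or> a0 = 0"
    proof (rule ccontr)
      assume "\<not> (k0 \<or> a0 = 0)"
      then have "G 1 = real_of_int (bb N p a0) * (1 - real p) + r a0" using G1 lF[of a0 1] unfolding ak0 bb'_def by simp
      moreover have "real_of_int (bb N p a0) * (1 - real p) < 0" using bb1[OF a0S] p1 by (intro mult_pos_neg) auto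
      ultimately show False using G1r[OF a0S] by simp
    qed
    then have s0: "sl j0 = - a0" and G1': "G 1 = r a0" using G1 lT[of a0 1] unfolding ak0 sl_def bb'_def
      by (auto simp: cc_def bb'_def)
    have k1: "\<not> k1 \<or> a1 = 0"
    proof (rule ccontr)
      assume "\<not> (\<not> k1 \<or> a1 = 0)"
      then have "G (real p) = - real_of_int a1 * (real p - 1) + r a1" using Gp lT unfolding ak1 by auto
      moreover have "- real_of_int a1 * (real p - 1) < 0" using \<open>\<not> (\<not> k1 \<or> a1 = 0)\<close> a1S p1
        unfolding S_def R_def by (intro mult_neg_pos) auto
      ultimately show False using Gpr[OF a1S] by simp
    qed
    then have s1: "sl j1 = bb' a1" and Gp': "G (real p) = r a1" using Gp lF[of a1 "real p"] unfolding ak1 sl_def bb'_def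
      by (auto simp: cc_def bb'_def)
    have g1p: "G 1 = G (real p)" using G1' Gp' G1r[OF a1S] Gpr[OF a0S] by simp
    have sl1: "sl j1 \<le> bb' a0"
    proof -
      have "real_of_int (bb' a0) * (ts!(n-2) - real p) + r a0 \<le> G (ts!(n-2))"
        using Gge[of "(a0,False)" "ts!(n-2)"] lF a0S unfolding I_def by auto
      also have "\<dots> = real_of_int (sl j1) * ts!(n-2) + cc j1" using j1 tn2 by auto
      also have "\<dots> = real_of_int (sl j1) * (ts!(n-2) - real p) + G (real p)" using Gp by (simp add: algebra_simps)
      finally have "real_of_int (sl j1) * (real p - ts!(n-2)) \<le> real_of_int (bb' a0) * (real p - ts!(n-2))"
        using G1' g1p by (simp add: algebra_simps)
      moreover have "real p - ts!(n-2) > 0" using tn2 tn by simp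
      ultimately have "real_of_int (sl j1) \<le> real_of_int (bb' a0)" by (meson mult_right_le_imp_le)
      then show ?thesis by simp
    qed
    have d0: "(G has_real_derivative real_of_int (sl j0)) (at 1 within {1..real p})"
      using deriv_left[of 1 "ts!1" "real p" G] j0 t0 t01 t1p by auto
    have d1: "(G has_real_derivative real_of_int (sl j1)) (at (real p) within {1..real p})"
      using deriv_right[of "ts!(n-2)" "real p" 1 G] j1 tn tn1 tn2 by auto
    have "real p * real_of_int (bb' a0) \<le> real_of_int (N - a0)"
      using bb_le[of p N a0] p1 Np unfolding bb'_def by auto
    moreover have "real p * real_of_int (sl j1) \<le> real p * real_of_int (bb' a0)" using sl1 by (intro mult_left_mono) auto
    ultimately have "- real_of_int (sl j0) + real p * real_of_int (sl j1) \<le> real_of_int N" using s0 by simp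
    then have EG: "Eg N p G" unfolding Eg_def using cont conv pw g1p d0 d1 by blast
    show ?thesis unfolding E_Np_alt sig using EG by blast
  qed
qed

lemma phi_ninf: "phi N p a y \<noteq> \<infinity>" by (simp add: phi_alt)

lemma sigma_restrict:
  assumes "T \<subseteq> {0..N - int p}"
  shows "sigma N p (\<lambda>b. if b \<in> T then xs b else -\<infinity>) = (\<lambda>y. SUP b\<in>T. phi N p b y + xs b)"
proof
  fix y
  have eq: "phi N p b y + (if b \<in> T then xs b else -\<infinity>) = (if b \<in> T then phi N p b y + xs b else -\<infinity>)" for b
    using phi_ninf[of N p b y] by auto
  show "sigma N p (\<lambda>b. if b \<in> T then xs b else -\<infinity>) y = (SUP b\<in>T. phi N p b y + xs b)"
    unfolding sigma_def eq
  proof (rule antisym)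
    show "(SUP b\<in>{0..N - int p}. if b \<in> T then phi N p b y + xs b else - \<infinity>) \<le> (SUP b\<in>T. phi N p b y + xs b)"
      by (rule SUP_least) (auto intro: SUP_upper)
    show "(SUP b\<in>T. phi N p b y + xs b) \<le> (SUP b\<in>{0..N - int p}. if b \<in> T then phi N p b y + xs b else - \<infinity>)"
    proof (rule SUP_least)
      fix b assume b: "b \<in> T"
      show "phi N p b y + xs b \<le> (SUP b\<in>{0..N - int p}. if b \<in> T then phi N p b y + xs b else - \<infinity>)"
        by (rule SUP_upper2[of b]) (use assms b in auto)
    qed
  qed
qed

lemma phi_in_E:
  assumes p1: "1 < real p" and Np: "int p \<le> N" and a: "a \<in> {0..N - int p}"
  shows "phi N p a \<in> E_Np N p"
proof -
  have "sigma N p (\<lambda>b. if b \<in> {a} then 0 else -\<infinity>) \<in> E_Np N p"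
    using p1 Np by (intro sigma_in_E) auto
  moreover have "sigma N p (\<lambda>b. if b \<in> {a} then 0 else -\<infinity>) = (\<lambda>y. SUP b\<in>{a}. phi N p b y + 0)"
    using sigma_restrict[of "{a}" N p "\<lambda>b. 0"] a by simp
  ultimately show ?thesis by simp
qed


lemma key_ext:
  assumes p1: "1 < real p" and Np: "int p \<le> N" and a: "a \<in> {0..N - int p}"
    and f: "f \<in> E_Np N p" and fle: "\<forall>y. f y \<le> phi N p a y"
    and y12: "1 < y1" "y1 < y2" "y2 \<le> real p"
    and f1: "f y1 = ereal (- real_of_int a * y1 + real_of_int a)"
    and f2: "f y2 = ereal (- real_of_int a * y2 + real_of_int a)"
  shows "f = phi N p a"
proof -
  have "f \<noteq> (\<lambda>x. -\<infinity>)" using f1 by auto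
  then obtain g where fg: "\<forall>x. f x = (if x \<in> {1..real p} then ereal (g x) else -\<infinity>)" and E: "Eg N p g"
    using f unfolding E_Np_alt by blast
  have cv: "convex_on {1..real p} g" and g1p: "g 1 = g (real p)" using E unfolding Eg_def by blast+
  define s where "s = - real_of_int a"
  define c where "c = real_of_int a"
  have g1: "g y1 = s * y1 + c" and g2: "g y2 = s * y2 + c"
    using f1 f2 fg[rule_format, of y1] fg[rule_format, of y2] y12 unfolding s_def c_def by auto
  have gle: "g y \<le> phr N p a y" if "y \<in> {1..real p}" for y
    using fle[rule_format, of y] fg[rule_format, of y] that by (simp add: phi_alt)
  have bb1: "a \<noteq> 0 \<Longrightarrow> bb N p a \<ge> 1" using a p1 by (intro bb_ge) auto
  have "phr N p a 1 = 0"
  proof (cases "a = 0")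
    case False
    have "real_of_int (bb N p a) * (1 - real p) \<le> 0" using bb1[OF False] p1 by (intro mult_nonneg_nonpos) auto
    then show ?thesis using False unfolding phr_def by simp
  qed (simp add: phr_def)
  then have "g 1 \<le> 0" using gle[of 1] p1 by simp
  moreover have "s * 1 + c \<le> g 1" using conv_bwd[OF cv _ y12(3) y12(2) y12(1) g1 g2] by simp
  ultimately have g10: "g 1 = s * 1 + c" unfolding s_def c_def by simp
  have lge: "s * y + c \<le> g y" if y: "y \<in> {1..real p}" for y
  proof -
    consider "y < y1" | "y = y1" | "y1 < y" by linarith
    then show ?thesis
    proof cases
      case 1 then show ?thesis using conv_bwd[OF cv _ y12(3) y12(2) 1 g1 g2] y by auto
    next
      case 2 then show ?thesis using g1 by simp
    next
      case 3 then show ?thesis using conv_fwd[OF cv _ _ y12(1) 3 g10 g1] y by auto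
    qed
  qed
  have gge: "phr N p a y \<le> g y" if y: "y \<in> {1..real p}" for y
  proof (cases "a = 0")
    case True
    then show ?thesis using lge[OF y] unfolding phr_def s_def c_def by simp
  next
    case False
    obtain sF sL :: int where hF: "\<forall>x\<in>{1..real p}. g 1 + sF * (x-1) \<le> g x"
      and hL: "\<forall>x\<in>{1..real p}. g (real p) + sL * (x - real p) \<le> g x" and con: "- sF + int p * sL \<le> N"
      using EF[OF E p1] by blast
    have "g 1 + sF * (y1 - 1) \<le> g y1" using hF y12 by auto
    then have "real_of_int sF * (y1 - 1) \<le> (- real_of_int a) * (y1 - 1)" using g1 g10 unfolding s_def c_def
      by (simp add: algebra_simps)
    moreover have "y1 - 1 > 0" using y12 by simp
    ultimately have "real_of_int sF \<le> - real_of_int a" by (meson mult_right_le_imp_le)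
    then have "sF \<le> - a" by simp
    then have "sL \<le> bb N p a" using con p1 by (intro bb_ge) auto
    then have "(real_of_int (bb N p a) - real_of_int sL) * (y - real p) \<le> 0" using y
      by (intro mult_nonneg_nonpos) auto
    then have "real_of_int (bb N p a) * (y - real p) \<le> g (real p) + sL * (y - real p)"
      using g1p g10 unfolding s_def c_def by (simp add: algebra_simps)
    also have "\<dots> \<le> g y" using hL y by auto
    finally show ?thesis using lge[OF y] False unfolding phr_def s_def c_def by (simp add: algebra_simps)
  qed
  show ?thesis
  proof
    fix y show "f y = phi N p a y"
      using fg[rule_format, of y] gle[of y] gge[of y] by (auto simp: phi_alt)
  qed
qed


lemma phi_extremal:
  assumes p1: "1 < real p" and Np: "int p \<le> N" and a: "a \<in> {0..N - int p}"
  shows "rmax_extremal (E_Np N p) (phi N p a)"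
  unfolding rmax_extremal_def
proof (intro conjI ballI impI)
  show "phi N p a \<in> E_Np N p" using phi_in_E[OF p1 Np a] .
  show "phi N p a \<noteq> (\<lambda>x. - \<infinity>)"
  proof
    assume "phi N p a = (\<lambda>x. - \<infinity>)"
    then have "phi N p a 1 = -\<infinity>" by simp
    then show False using p1 by (simp add: phi_alt)
  qed
  fix f1 f2 assume f1: "f1 \<in> E_Np N p" and f2: "f2 \<in> E_Np N p" and h: "sup f1 f2 = phi N p a"
  have hy: "max (f1 y) (f2 y) = phi N p a y" for y using fun_cong[OF h, of y] by (simp add: sup_max)
  have le1: "\<forall>y. f1 y \<le> phi N p a y" and le2: "\<forall>y. f2 y \<le> phi N p a y" using hy by (metis max.cobounded1 max.cobounded2)+
  define b where "b = bb N p a"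
  have b1: "b \<ge> 1" unfolding b_def using a p1 by (intro bb_ge) auto
  define D where "D = real_of_int (a + b)"
  have D1: "D \<ge> 1" using a b1 unfolding D_def by simp
  define z where "z j = 1 + real j * (real p - 1) / (3 * D)" for j :: nat
  define l where "l y = - real_of_int a * y + real_of_int a" for y
  have zfacts: "1 < z j \<and> z j \<le> real p \<and> phi N p a (z j) = ereal (l (z j))" if j: "1 \<le> j" "j \<le> 3" for j
  proof -
    have Dz: "D * (z j - 1) = real j * (real p - 1) / 3" unfolding z_def using D1 by (simp add: field_simps)
    have pos: "real j * (real p - 1) / (3 * D) > 0" using j p1 D1 by (intro divide_pos_pos mult_pos_pos) auto
    have "real j * (real p - 1) / (3 * D) \<le> real 3 * (real p - 1) / (3 * 1)"
      using j p1 D1 by (intro frac_le mult_mono) auto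
    then have zp: "z j \<le> real p" unfolding z_def by simp
    have "phr N p a (z j) = l (z j)"
    proof (cases "a = 0")
      case True then show ?thesis unfolding phr_def l_def by simp
    next
      case False
      have "real_of_int b * (z j - real p) + real_of_int a * (z j - 1) = D * (z j - 1) - real_of_int b * (real p - 1)"
        unfolding D_def by (simp add: algebra_simps)
      also have "\<dots> \<le> 0"
      proof -
        have "real j * (real p - 1) \<le> 3 * (real p - 1)" using j p1 by (intro mult_right_mono) auto
        moreover have "1 * (real p - 1) \<le> real_of_int b * (real p - 1)" using b1 p1 by (intro mult_right_mono) auto
        ultimately show ?thesis unfolding Dz by simp
      qed
      finally have "real_of_int b * (z j - real p) \<le> - real_of_int a * (z j - 1)" by simp
      then show ?thesis using False unfolding phr_def l_def b_def by (simp add: algebra_simps)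
    qed
    then show ?thesis using pos zp p1 unfolding z_def by (simp add: phi_alt)
  qed
  have zlt: "z 1 < z 2" "z 2 < z 3" unfolding z_def using p1 D1 by (simp_all add: divide_strict_right_mono)
  have hz: "f1 (z j) = ereal (l (z j)) \<or> f2 (z j) = ereal (l (z j))" if "1 \<le> j" "j \<le> 3" for j
    using hy[of "z j"] zfacts[OF that] by (metis max_def)
  have K: "f = phi N p a" if f: "f \<in> E_Np N p" "\<forall>y. f y \<le> phi N p a y"
    and u: "1 \<le> j" "j < k" "k \<le> 3" "f (z j) = ereal (l (z j))" "f (z k) = ereal (l (z k))" for f j k
  proof -
    have "z j < z k" unfolding z_def using u p1 D1 by (intro add_strict_left_mono divide_strict_right_mono mult_strict_right_mono) auto
    then show ?thesis using key_ext[OF p1 Np a f, of "z j" "z k"] zfacts[of j] zfacts[of k] u unfolding l_def by auto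
  qed
  have c1: "f1 (z 1) = ereal (l (z 1)) \<or> f2 (z 1) = ereal (l (z 1))" using hz[of 1] by simp
  have c2: "f1 (z 2) = ereal (l (z 2)) \<or> f2 (z 2) = ereal (l (z 2))" using hz[of 2] by simp
  have c3: "f1 (z 3) = ereal (l (z 3)) \<or> f2 (z 3) = ereal (l (z 3))" using hz[of 3] by simp
  have Ka: "f = phi N p a" if "f \<in> E_Np N p" "\<forall>y. f y \<le> phi N p a y"
    "f (z 1) = ereal (l (z 1))" "f (z 2) = ereal (l (z 2))" for f
    by (rule K[OF that(1,2), of 1 2]) (use that in simp_all)
  have Kb: "f = phi N p a" if "f \<in> E_Np N p" "\<forall>y. f y \<le> phi N p a y"
    "f (z 1) = ereal (l (z 1))" "f (z 3) = ereal (l (z 3))" for f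
    by (rule K[OF that(1,2), of 1 3]) (use that in simp_all)
  have Kc: "f = phi N p a" if "f \<in> E_Np N p" "\<forall>y. f y \<le> phi N p a y"
    "f (z 2) = ereal (l (z 2))" "f (z 3) = ereal (l (z 3))" for f
    by (rule K[OF that(1,2), of 2 3]) (use that in simp_all)
  show "f1 = phi N p a \<or> f2 = phi N p a"
    using c1 c2 c3 Ka[OF f1 le1] Kb[OF f1 le1] Kc[OF f1 le1] Ka[OF f2 le2] Kb[OF f2 le2] Kc[OF f2 le2] by blast
qed

lemma sigma_minf: "sigma N p (\<lambda>b. -\<infinity>) = (\<lambda>y. -\<infinity>)"
  unfolding sigma_def by (rule ext, rule SUP_minf) (simp add: phi_alt)

lemma sigma_R:
  "sigma N p (\<lambda>b. if b \<in> {0..N - int p} then xs b else -\<infinity>) = sigma N p xs"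
  unfolding sigma_def by (rule ext, rule SUP_cong) auto

lemma ray_shift: "rmax_ray (\<lambda>y. phi N p a y + ereal c) = rmax_ray (phi N p a)"
proof -
  have "(\<lambda>y. phi N p a y + ereal c + x) = (\<lambda>y. phi N p a y + (ereal c + x))" for x
    by (simp add: add.assoc)
  moreover have "(\<lambda>y. phi N p a y + x) = (\<lambda>y. phi N p a y + ereal c + (x - ereal c))" for x
  proof -
    have "ereal c + (x - ereal c) = x" by (cases x) auto
    then show ?thesis by (simp add: add.assoc)
  qed
  moreover have "x \<noteq> \<infinity> \<Longrightarrow> ereal c + x \<noteq> \<infinity>" for x by (cases x) auto
  moreover have "x \<noteq> \<infinity> \<Longrightarrow> x - ereal c \<noteq> \<infinity>" for x by (cases x) auto
  ultimately show ?thesis unfolding rmax_ray_def by blast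
qed

lemma E_decomp:
  assumes p1: "1 < real p" and Np: "int p \<le> N" and f: "f \<in> E_Np N p"
  shows "\<exists>xs. (\<forall>a\<in>{0..N - int p}. xs a \<noteq> \<infinity>) \<and> sigma N p xs = f"
proof (cases "f = (\<lambda>x. -\<infinity>)")
  case True
  then show ?thesis using sigma_minf[of N p] by (intro exI[of _ "\<lambda>b. -\<infinity>"]) auto
next
  case False
  then obtain g where fg: "\<forall>x. f x = (if x \<in> {1..real p} then ereal (g x) else -\<infinity>)" and E: "Eg N p g"
    using f unfolding E_Np_alt by blast
  have "f = (\<lambda>x. if x \<in> {1..real p} then ereal (g x) else -\<infinity>)" using fg by auto
  then show ?thesis using decomp[OF E p1 Np] by simp
qed

lemma ext_is_phi:
  assumes p1: "1 < real p" and Np: "int p \<le> N" and ex: "rmax_extremal (E_Np N p) f"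
  shows "\<exists>a\<in>{0..N - int p}. \<exists>c. f = (\<lambda>y. phi N p a y + ereal c)"
proof -
  define R where "R = {0..N - int p}"
  have fE: "f \<in> E_Np N p" and fne: "f \<noteq> (\<lambda>x. -\<infinity>)"
    and fex: "\<forall>f1\<in>E_Np N p. \<forall>f2\<in>E_Np N p. sup f1 f2 = f \<longrightarrow> f1 = f \<or> f2 = f"
    using ex unfolding rmax_extremal_def by blast+
  obtain xs where xs: "\<forall>a\<in>R. xs a \<noteq> \<infinity>" and sx: "sigma N p xs = f"
    using E_decomp[OF p1 Np fE] unfolding R_def by blast
  define rs where "rs T = (\<lambda>b. if b \<in> T then xs b else -\<infinity>)" for T
  have rsE: "sigma N p (rs T) \<in> E_Np N p" if "T \<subseteq> R" for T
    using that xs unfolding rs_def R_def by (intro sigma_in_E[OF p1 Np]) auto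
  have main: "T \<subseteq> R \<Longrightarrow> sigma N p (rs T) = f \<Longrightarrow> \<exists>a\<in>T. f = (\<lambda>y. phi N p a y + xs a)" if "finite T" for T
    using that
  proof (induction T rule: finite_induct)
    case empty
    have "sigma N p (rs {}) = (\<lambda>y. -\<infinity>)" unfolding rs_def using sigma_minf by simp
    then show ?case using empty fne by simp
  next
    case (insert a T)
    have s1: "sigma N p (rs T) = (\<lambda>y. SUP b\<in>T. phi N p b y + xs b)"
      using sigma_restrict[of T N p xs] insert.prems unfolding rs_def R_def by simp
    have s2: "sigma N p (rs {a}) = (\<lambda>y. phi N p a y + xs a)"
      using sigma_restrict[of "{a}" N p xs] insert.prems unfolding rs_def R_def by simp
    have s3: "sigma N p (rs (insert a T)) = (\<lambda>y. SUP b\<in>insert a T. phi N p b y + xs b)"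
      using sigma_restrict[of "insert a T" N p xs] insert.prems unfolding rs_def R_def by simp
    have "sup (sigma N p (rs {a})) (sigma N p (rs T)) = f"
      using insert.prems(2) unfolding s1 s2 s3 by (auto simp: sup_fun_def)
    then have "sigma N p (rs {a}) = f \<or> sigma N p (rs T) = f"
      using fex rsE[of "{a}"] rsE[of T] insert.prems by auto
    then show ?case
    proof
      assume "sigma N p (rs {a}) = f" then show ?thesis using s2 by auto
    next
      assume "sigma N p (rs T) = f" then show ?thesis using insert by auto
    qed
  qed
  have "sigma N p (rs R) = f" using sigma_R[of N p xs] sx unfolding rs_def R_def by simp
  then obtain a where a: "a \<in> R" "f = (\<lambda>y. phi N p a y + xs a)" using main[of R] unfolding R_def by auto
  have "xs a \<noteq> -\<infinity>"
  proof
    assume "xs a = -\<infinity>"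
    then have "f = (\<lambda>y. -\<infinity>)" using a(2) by (auto simp: phi_alt)
    then show False using fne by simp
  qed
  then obtain c where "xs a = ereal c" using xs a(1) by (cases "xs a") auto
  then show ?thesis using a unfolding R_def by auto
qed

theorem propositionA2:
  fixes p :: nat and N :: int
  assumes "prime p" and "N \<ge> int p"
  shows "(\<forall>a\<in>{0..N - int p}. rmax_extremal (E_Np N p) (phi N p a))
     \<and> {rmax_ray f | f. rmax_extremal (E_Np N p) f} = (\<lambda>a. rmax_ray (phi N p a)) ` {0..N - int p}
     \<and> (\<forall>xs. (\<forall>a\<in>{0..N - int p}. xs a \<noteq> \<infinity>) \<longrightarrow> sigma N p xs \<in> E_Np N p)
     \<and> (\<forall>f\<in>E_Np N p. \<exists>xs. (\<forall>a\<in>{0..N - int p}. xs a \<noteq> \<infinity>) \<and> sigma N p xs = f)"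
proof -
  have p1: "1 < real p" using prime_gt_1_nat[OF assms(1)] by simp
  have Np: "int p \<le> N" using assms(2) by simp
  have P1: "\<forall>a\<in>{0..N - int p}. rmax_extremal (E_Np N p) (phi N p a)"
    using phi_extremal[OF p1 Np] by blast
  have P2: "{rmax_ray f | f. rmax_extremal (E_Np N p) f} = (\<lambda>a. rmax_ray (phi N p a)) ` {0..N - int p}"
  proof
    show "{rmax_ray f | f. rmax_extremal (E_Np N p) f} \<subseteq> (\<lambda>a. rmax_ray (phi N p a)) ` {0..N - int p}"
    proof
      fix X assume "X \<in> {rmax_ray f | f. rmax_extremal (E_Np N p) f}"
      then obtain f where X: "X = rmax_ray f" and ex: "rmax_extremal (E_Np N p) f" by blast
      obtain a c where a: "a \<in> {0..N - int p}" and fc: "f = (\<lambda>y. phi N p a y + ereal c)"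
        using ext_is_phi[OF p1 Np ex] by blast
      show "X \<in> (\<lambda>a. rmax_ray (phi N p a)) ` {0..N - int p}" using X fc a ray_shift by auto
    qed
    show "(\<lambda>a. rmax_ray (phi N p a)) ` {0..N - int p} \<subseteq> {rmax_ray f | f. rmax_extremal (E_Np N p) f}"
      using P1 by blast
  qed
  have P3: "\<forall>xs. (\<forall>a\<in>{0..N - int p}. xs a \<noteq> \<infinity>) \<longrightarrow> sigma N p xs \<in> E_Np N p"
    using sigma_in_E[OF p1 Np] by blast
  have P4: "\<forall>f\<in>E_Np N p. \<exists>xs. (\<forall>a\<in>{0..N - int p}. xs a \<noteq> \<infinity>) \<and> sigma N p xs = f"
    using E_decomp[OF p1 Np] by blast
  show ?thesis using P1 P2 P3 P4 by blast
qed


end
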